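(* Let $k(\cdot\mid\theta)$ be the $\mathrm{N}(\theta,1)$ density, $q_0$ the $\mathrm{N}(0,1)$ density, $\theta^*\in\mathbb{R}$ and $x_1=\dots=x_n=\theta^*$. Then for every $s=1,\dots,n$ and every partition $A=\{A_1,\dots,A_s\}\in\tau_s(n)$, $$\frac{\prod_{j=1}^sm(x_{A_j})}{m(x_{1:n})}=\Big\{\frac{n+1}{\prod_{j=1}^s(a_j+1)}\Big\}^{1/2}\exp\Big\{\frac{{\theta^*}^2}{2}\Big(-\frac{n^2}{n+1}+\sum_{j=1}^s\frac{a_j^2}{a_j+1}\Big)\Big\}\le\Big(\frac{n}{\prod_{j=1}^sa_j}\Big)^{1/2}.$$
   Context: $\tau_s(n)$ is the set of partitions of $\{1,\dots,n\}$ into $s$ nonempty blocks, $a_j=|A_j|$, and for $B\subseteq\{1,\dots,n\}$, $m(x_B)=\int\prod_{i\in B}k(x_i\mid\theta)q_0(\theta)d\theta$. *)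

theory Defs
  imports "HOL-Probability.Probability" "HOL-Library.Disjoint_Sets"
begin

definition kern :: "real \<Rightarrow> real \<Rightarrow> real" where
  "kern x \<theta> = normal_density \<theta> 1 x"

definition q0 :: "real \<Rightarrow> real" where
  "q0 \<theta> = normal_density 0 1 \<theta>"

definition marg :: "(nat \<Rightarrow> real) \<Rightarrow> nat set \<Rightarrow> real" where
  "marg x B = (\<integral>\<theta>. (\<Prod>i\<in>B. kern (x i) \<theta>) * q0 \<theta> \<partial>lborel)"

definition tau :: "nat \<Rightarrow> nat \<Rightarrow> nat set set set" where
  "tau s n = {P. partition_on {1..n} P \<and> card P = s}"

end

theory Submission
  imports Defs
begin

lemma marg_eq:
  assumes fin: "finite B" and xB: "\<forall>i\<in>B. x i = \<theta>"
  shows "marg x B = exp (- (\<theta>\<^sup>2 * real (card B)) / (2 * (real (card B) + 1)))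
                     / (sqrt (2*pi) ^ card B * sqrt (real (card B) + 1))"
proof -
  define a where "a = real (card B)"
  define c where "c = a + 1"
  define K where "K = exp (- (\<theta>\<^sup>2 * a) / (2 * c)) / (sqrt (2*pi) ^ card B * sqrt c)"
  have c0: "c > 0" unfolding c_def a_def by simp
  have pt: "(\<Prod>i\<in>B. kern (x i) t) * q0 t = K * normal_density (a*\<theta>/c) (1/sqrt c) t" for t
  proof -
    have "(\<Prod>i\<in>B. kern (x i) t) = (\<Prod>i\<in>B. normal_density t 1 \<theta>)"
      using xB by (intro prod.cong) (auto simp: kern_def)
    also have "\<dots> = (exp (-(\<theta> - t)\<^sup>2/2) / sqrt (2*pi)) ^ card B"
      by (simp add: normal_density_def)
    also have "\<dots> = exp (a * (-(\<theta> - t)\<^sup>2/2)) / sqrt (2*pi) ^ card B"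
      unfolding a_def by (simp add: exp_of_nat_mult[symmetric] power_divide)
    finally have p: "(\<Prod>i\<in>B. kern (x i) t) = exp (a * (-(\<theta> - t)\<^sup>2/2)) / sqrt (2*pi) ^ card B" .
    have q: "q0 t = exp (-t\<^sup>2/2) / sqrt (2*pi)" by (simp add: q0_def normal_density_def)
    have nd: "normal_density (a*\<theta>/c) (1/sqrt c) t = sqrt c / sqrt (2*pi) * exp (- c * (t - a*\<theta>/c)\<^sup>2 / 2)"
      using c0 by (simp add: normal_density_def real_sqrt_divide power_divide field_simps)
    have ex: "a * (-(\<theta> - t)\<^sup>2/2) + (-t\<^sup>2/2) = - (\<theta>\<^sup>2 * a) / (2 * c) + (- c * (t - a*\<theta>/c)\<^sup>2 / 2)"
    proof -
      have e1: "c * (t - a*\<theta>/c)\<^sup>2 = c*t\<^sup>2 - 2*a*\<theta>*t + a\<^sup>2*\<theta>\<^sup>2/c"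
        using c0 by (simp add: power2_eq_square field_simps)
      have e2: "\<theta>\<^sup>2 * a / c + a\<^sup>2*\<theta>\<^sup>2/c = \<theta>\<^sup>2 * a"
      proof -
        have "\<theta>\<^sup>2 * a / c + a\<^sup>2*\<theta>\<^sup>2/c = (\<theta>\<^sup>2 * a * c) / c"
          unfolding add_divide_distrib[symmetric] by (simp add: c_def power2_eq_square algebra_simps)
        also have "\<dots> = \<theta>\<^sup>2 * a" using c0 by simp
        finally show ?thesis .
      qed
      have h3: "a * (-(\<theta> - t)\<^sup>2/2) + (-t\<^sup>2/2) = -(\<theta>\<^sup>2 * a)/2 - (c*t\<^sup>2 - 2*a*\<theta>*t)/2"
        by (simp add: c_def power2_eq_square field_simps)
      have h4: "- (\<theta>\<^sup>2 * a) / (2 * c) = -(\<theta>\<^sup>2 * a / c)/2" by simp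
      have h5: "- c * (t - a*\<theta>/c)\<^sup>2 / 2 = -(c * (t - a*\<theta>/c)\<^sup>2) / 2" by simp
      have e2': "\<theta>\<^sup>2 * a / c = \<theta>\<^sup>2 * a - a\<^sup>2*\<theta>\<^sup>2/c" using e2 by linarith
      show ?thesis unfolding h3 h4 h5 e1 e2' by (simp add: algebra_simps diff_divide_distrib add_divide_distrib)
    qed
    have "(\<Prod>i\<in>B. kern (x i) t) * q0 t = exp (a * (-(\<theta> - t)\<^sup>2/2) + (-t\<^sup>2/2)) / (sqrt (2*pi) ^ card B * sqrt (2*pi))"
      unfolding p q by (simp add: exp_add[symmetric] exp_diff[symmetric])
    also have "\<dots> = K * normal_density (a*\<theta>/c) (1/sqrt c) t"
      unfolding ex nd K_def exp_add using c0 by (simp add: field_simps)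
    finally show ?thesis .
  qed
  have "marg x B = (\<integral>t. K * normal_density (a*\<theta>/c) (1/sqrt c) t \<partial>lborel)"
    unfolding marg_def using pt by simp
  also have "\<dots> = K * (\<integral>t. normal_density (a*\<theta>/c) (1/sqrt c) t \<partial>lborel)"
    by (rule integral_mult_right_zero)
  also have "\<dots> = K" using c0 by (simp add: integral_normal_density)
  finally show ?thesis unfolding K_def c_def a_def .
qed

lemma sqrt_prod: "finite A \<Longrightarrow> (\<Prod>B\<in>A. sqrt (f B)) = sqrt (\<Prod>B\<in>A. f B :: real)"
  by (induct rule: finite_induct) (auto simp: real_sqrt_mult)

theorem lemmaS19:
  fixes x :: "nat \<Rightarrow> real" and \<theta>s :: real and n s :: nat and A :: "nat set set"
  assumes "\<forall>i\<in>{1..n}. x i = \<theta>s"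
    and "s \<in> {1..n}"
    and "A \<in> tau s n"
  shows "((\<Prod>B\<in>A. marg x B) / marg x {1..n}
           = (real (n + 1) / (\<Prod>B\<in>A. real (card B + 1))) powr (1/2)
             * exp (\<theta>s\<^sup>2 / 2 * (- (real n)\<^sup>2 / real (n + 1)
                    + (\<Sum>B\<in>A. (real (card B))\<^sup>2 / real (card B + 1))))
       \<and> (real (n + 1) / (\<Prod>B\<in>A. real (card B + 1))) powr (1/2)
             * exp (\<theta>s\<^sup>2 / 2 * (- (real n)\<^sup>2 / real (n + 1)
                    + (\<Sum>B\<in>A. (real (card B))\<^sup>2 / real (card B + 1))))
         \<le> (real n / (\<Prod>B\<in>A. real (card B))) powr (1/2))"
proof -
  have part: "partition_on {1..n} A" and cardA: "card A = s" using assms(3) by (auto simp: tau_def)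
  have UA: "\<Union>A = {1..n}" and disj: "disjoint A" and ne: "{} \<notin> A"
    using part by (auto simp: partition_on_def)
  have finA: "finite A"
  proof -
    have "A \<subseteq> Pow {1..n}" using UA by blast
    thus ?thesis using finite_subset by blast
  qed
  have Asub: "B \<subseteq> {1..n}" if "B \<in> A" for B using UA that by blast
  have finB: "finite B" if "B \<in> A" for B using Asub[OF that] finite_subset by blast
  have cardpos: "card B \<ge> 1" if "B \<in> A" for B
    using finB[OF that] ne that by (metis One_nat_def Suc_leI card_gt_0_iff)
  have cardle: "card B \<le> n" if "B \<in> A" for B
    using card_mono[OF _ Asub[OF that]] by simp
  have sumc: "(\<Sum>B\<in>A. card B) = n"
    using card_Union_disjoint[of A] disj finB UA by (simp add: disjoint_def pairwise_def disjnt_def)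
  have sumr: "(\<Sum>B\<in>A. real (card B)) = real n"
    using sumc by (metis of_nat_sum)
  have Ane: "A \<noteq> {}" using assms(2) cardA by auto
  have n1: "n \<ge> 1" using assms(2) by auto
  define g where "g = (\<lambda>a::nat. exp (- (\<theta>s\<^sup>2 * real a) / (2 * (real a + 1)))
                     / (sqrt (2*pi) ^ a * sqrt (real a + 1)))"
  have mB: "marg x B = g (card B)" if "B \<in> A" for B
    unfolding g_def using marg_eq[OF finB[OF that], of x \<theta>s] Asub[OF that] assms(1) by blast
  have mN: "marg x {1..n} = g n"
    unfolding g_def using marg_eq[of "{1..n}" x \<theta>s] assms(1) by simp
  define P1 where "P1 = (\<Prod>B\<in>A. real (card B + 1))"
  define P0 where "P0 = (\<Prod>B\<in>A. real (card B))"
  define S1 where "S1 = (\<Sum>B\<in>A. (real (card B))\<^sup>2 / real (card B + 1))"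
  have P1pos: "P1 > 0" unfolding P1_def by (rule prod_pos) simp
  have P0pos: "P0 > 0" unfolding P0_def using cardpos by (intro prod_pos) force
  have expsum: "(\<Sum>B\<in>A. - (\<theta>s\<^sup>2 * real (card B)) / (2 * (real (card B) + 1)))
      = \<theta>s\<^sup>2 / 2 * (S1 - real n)"
  proof -
    have "(\<Sum>B\<in>A. - (\<theta>s\<^sup>2 * real (card B)) / (2 * (real (card B) + 1)))
        = (\<Sum>B\<in>A. \<theta>s\<^sup>2 / 2 * ((real (card B))\<^sup>2 / real (card B + 1) - real (card B)))"
      by (intro sum.cong refl) (simp add: field_simps power2_eq_square)
    also have "\<dots> = \<theta>s\<^sup>2 / 2 * (S1 - real n)"
      unfolding S1_def sumr[symmetric] sum_subtractf[symmetric] sum_distrib_left by (rule refl)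
    finally show ?thesis .
  qed
  have prodg: "(\<Prod>B\<in>A. g (card B)) = exp (\<theta>s\<^sup>2 / 2 * (S1 - real n)) / (sqrt (2*pi) ^ n * sqrt P1)"
  proof -
    have "(\<Prod>B\<in>A. g (card B)) = (\<Prod>B\<in>A. exp (- (\<theta>s\<^sup>2 * real (card B)) / (2 * (real (card B) + 1))))
        / ((\<Prod>B\<in>A. sqrt (2*pi) ^ card B) * (\<Prod>B\<in>A. sqrt (real (card B) + 1)))"
      unfolding g_def by (simp add: prod_dividef prod.distrib)
    also have "\<dots> = exp (\<theta>s\<^sup>2 / 2 * (S1 - real n)) / (sqrt (2*pi) ^ n * sqrt P1)"
      unfolding exp_sum[OF finA, symmetric] expsum power_sum[symmetric] sumc sqrt_prod[OF finA] P1_def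
      by (simp add: add.commute)
    finally show ?thesis .
  qed
  have gn: "g n = exp (\<theta>s\<^sup>2 / 2 * ((real n)\<^sup>2 / real (n+1) - real n)) / (sqrt (2*pi) ^ n * sqrt (real n + 1))"
    unfolding g_def by (simp add: field_simps power2_eq_square)
  have eq: "(\<Prod>B\<in>A. marg x B) / marg x {1..n}
      = (real (n + 1) / P1) powr (1/2) * exp (\<theta>s\<^sup>2 / 2 * (- (real n)\<^sup>2 / real (n + 1) + S1))"
  proof -
    have "(\<Prod>B\<in>A. marg x B) = (\<Prod>B\<in>A. g (card B))" using mB by (intro prod.cong) auto
    hence "(\<Prod>B\<in>A. marg x B) / marg x {1..n} = 
       exp (\<theta>s\<^sup>2 / 2 * (S1 - real n)) / (sqrt (2*pi) ^ n * sqrt P1) /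
       (exp (\<theta>s\<^sup>2 / 2 * ((real n)\<^sup>2 / real (n+1) - real n)) / (sqrt (2*pi) ^ n * sqrt (real n + 1)))"
      using prodg mN gn by simp
    also have "\<dots> = sqrt (real n + 1) / sqrt P1 * (exp (\<theta>s\<^sup>2 / 2 * (S1 - real n)) / exp (\<theta>s\<^sup>2 / 2 * ((real n)\<^sup>2 / real (n+1) - real n)))"
      using P1pos by (simp add: field_simps)
    also have "exp (\<theta>s\<^sup>2 / 2 * (S1 - real n)) / exp (\<theta>s\<^sup>2 / 2 * ((real n)\<^sup>2 / real (n+1) - real n))
       = exp (\<theta>s\<^sup>2 / 2 * (- (real n)\<^sup>2 / real (n + 1) + S1))"
      unfolding exp_diff[symmetric] by (rule arg_cong[where f=exp]) (simp add: field_simps)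
    also have "sqrt (real n + 1) / sqrt P1 = (real (n + 1) / P1) powr (1/2)"
      using P1pos by (simp add: powr_half_sqrt real_sqrt_divide add.commute)
    finally show ?thesis .
  qed
  have S1le: "S1 \<le> (real n)\<^sup>2 / real (n + 1)"
  proof -
    have "S1 \<le> (\<Sum>B\<in>A. real (card B) * (real n / real (n+1)))"
      unfolding S1_def
    proof (intro sum_mono)
      fix B assume "B \<in> A"
      hence le: "real (card B) \<le> real n" using cardle by simp
      have "real (card B) / real (card B + 1) \<le> real n / real (n+1)"
        using le by (simp add: field_simps)
      thus "(real (card B))\<^sup>2 / real (card B + 1) \<le> real (card B) * (real n / real (n+1))"
        by (metis mult_left_mono of_nat_0_le_iff power2_eq_square times_divide_eq_right)
    qed
    also have "\<dots> = (real n)\<^sup>2 / real (n + 1)"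
      unfolding sum_distrib_right[symmetric] sumr by (simp add: power2_eq_square)
    finally show ?thesis .
  qed
  have exple: "exp (\<theta>s\<^sup>2 / 2 * (- (real n)\<^sup>2 / real (n + 1) + S1)) \<le> 1"
    using S1le by (simp add: mult_nonneg_nonpos)
  have ratio: "real (n + 1) / P1 \<le> real n / P0"
  proof -
    obtain B0 where B0: "B0 \<in> A" using Ane by blast
    have P1eq: "P1 = P0 * (\<Prod>B\<in>A. 1 + 1 / real (card B))"
      unfolding P1_def P0_def prod.distrib[symmetric] using cardpos
      by (intro prod.cong refl) (force simp: field_simps)
    have "(\<Prod>B\<in>A. 1 + 1 / real (card B)) = (1 + 1 / real (card B0)) * (\<Prod>B\<in>A-{B0}. 1 + 1 / real (card B))"
      using finA B0 by (simp add: prod.remove)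
    also have "\<dots> \<ge> (1 + 1 / real (card B0)) * 1"
      by (intro mult_left_mono prod_ge_1) auto
    finally have "(\<Prod>B\<in>A. 1 + 1 / real (card B)) \<ge> 1 + 1 / real n"
      using cardle[OF B0] cardpos[OF B0] by (smt (verit) frac_le of_nat_0_less_iff of_nat_mono le_less_trans less_le_trans zero_less_one)
    hence "real n * P1 \<ge> real n * P0 * (1 + 1 / real n)"
      unfolding P1eq using P0pos n1 by (simp add: mult_left_mono)
    moreover have "real n * P0 * (1 + 1 / real n) = P0 * real (n+1)" using n1 by (simp add: field_simps)
    ultimately have "real n * P1 \<ge> P0 * real (n+1)" by linarith
    thus ?thesis using P0pos P1pos by (simp add: field_simps)
  qed
  have "(real (n + 1) / P1) powr (1/2) \<le> (real n / P0) powr (1/2)"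
    using ratio P1pos by (intro powr_mono2) auto
  hence ineq: "(real (n + 1) / P1) powr (1/2) * exp (\<theta>s\<^sup>2 / 2 * (- (real n)\<^sup>2 / real (n + 1) + S1))
     \<le> (real n / P0) powr (1/2)"
    using exple by (smt (verit) mult_left_le powr_ge_zero exp_gt_zero)
  show ?thesis using eq ineq unfolding P1_def P0_def S1_def by simp
qed
end
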